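(* Fix $k\in\mathbb Z^+$ and let $0<\varepsilon_1<0.001$. There exists $\varepsilon_0=\varepsilon_0(k,\varepsilon_1)$ with $0<\varepsilon_0<\varepsilon_1$ such that, for any population protocol $P$ with $k$ states and any configuration $z_0$, there exists $\varepsilon=\varepsilon(P,z_0)\in[\varepsilon_0,\varepsilon_1]$ such that for every rule $j$ of $P$ exactly one of the following holds: (i) for all $z\in B_{n^{\varepsilon_0}}(z_0)$, $p_j(z)\le n^{\varepsilon-1}$; (ii) for all $z\in B_{n^{\varepsilon_0}}(z_0)$, $p_j(z)\ge n^{24\varepsilon-1}$; and for every state $i\in\{1,\dots,k\}$ exactly one of the following holds: (iii) for all $z\in B_{n^{\varepsilon_0}}(z_0)$, $z^{(i)}\le n^{\varepsilon}$; (iv) for all $z\in B_{n^{\varepsilon_0}}(z_0)$, $z^{(i)}\ge n^{24\varepsilon}$.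
   Context: Population protocol with states $\{1,\dots,k\}$ on $n$ agents: in each step the scheduler picks an unordered pair of distinct agents uniformly at random; the protocol has rules $j=1,\dots,r$ (with $r\le k^4$) of the form $\{i_1(j),i_2(j)\}\to\{o_1(j),o_2(j)\}$, rule $j$ being executed with probability $q_j$ when the selected pair has states $\{i_1(j),i_2(j)\}$ (rule probabilities may depend on $n$). A configuration is $z=(z^{(1)},\dots,z^{(k)})\in\{0,\dots,n\}^k$ with $\sum_i z^{(i)}=n$, $z^{(i)}$ the number of agents in state $i$. $p_j(z)$ denotes the probability that rule $j$ is the next rule executed in configuration $z$ (so $p_j(z)=q_j\frac{z^{(i_1(j))}z^{(i_2(j))}}{n^2}(1-O(1/n))$). For $d>0$, the $d$-box around $z_0$ is $B_d(z_0)=\{z:\ z_0^{(i)}/d\le z^{(i)}\le d\max\{1,z_0^{(i)}\}\text{ for all }1\le i\le k\}$. *)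

theory Defs
  imports Complex_Main
begin

text \<open>States are 1..k. A configuration of n agents is a function z :: nat => nat
  giving the number of agents in each state; it vanishes outside {1..k} and
  sums to n.\<close>
definition config :: "nat \<Rightarrow> nat \<Rightarrow> (nat \<Rightarrow> nat) \<Rightarrow> bool" where
  "config k n z \<longleftrightarrow> (\<forall>i. i \<notin> {1..k} \<longrightarrow> z i = 0) \<and> (\<Sum>i\<in>{1..k}. z i) = n"

text \<open>A population protocol with k states and rules j = 1..r, rule j being
  {i1 j, i2 j} -> {o1 j, o2 j}, executed with probability q j when the selected
  pair has states {i1 j, i2 j}.\<close>
definition protocol ::
  "nat \<Rightarrow> nat \<Rightarrow> (nat \<Rightarrow> nat) \<Rightarrow> (nat \<Rightarrow> nat) \<Rightarrow> (nat \<Rightarrow> nat) \<Rightarrow> (nat \<Rightarrow> nat)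
   \<Rightarrow> (nat \<Rightarrow> real) \<Rightarrow> bool" where
  "protocol k r i1 i2 o1 o2 q \<longleftrightarrow>
     r \<le> k ^ 4 \<and>
     (\<forall>j\<in>{1..r}. i1 j \<in> {1..k} \<and> i2 j \<in> {1..k} \<and> o1 j \<in> {1..k} \<and> o2 j \<in> {1..k}
                 \<and> 0 \<le> q j \<and> q j \<le> 1) \<and>
     (\<forall>a\<in>{1..k}. \<forall>b\<in>{1..k}. (\<Sum>j | j \<in> {1..r} \<and> {i1 j, i2 j} = {a, b}. q j) \<le> 1)"

text \<open>Probability that a uniformly random unordered pair of distinct agents
  (out of n) has states {a, b} in configuration z.\<close>
definition pair_prob :: "nat \<Rightarrow> (nat \<Rightarrow> nat) \<Rightarrow> nat \<Rightarrow> nat \<Rightarrow> real" where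
  "pair_prob n z a b =
     (if a = b then real (z a choose 2) else real (z a) * real (z b)) / real (n choose 2)"

text \<open>p_j(z): probability that rule j is the next rule executed in configuration z.\<close>
definition rule_prob ::
  "nat \<Rightarrow> (nat \<Rightarrow> nat) \<Rightarrow> (nat \<Rightarrow> nat) \<Rightarrow> (nat \<Rightarrow> real) \<Rightarrow> nat \<Rightarrow> (nat \<Rightarrow> nat) \<Rightarrow> real" where
  "rule_prob n i1 i2 q j z = q j * pair_prob n z (i1 j) (i2 j)"

definition box :: "nat \<Rightarrow> nat \<Rightarrow> real \<Rightarrow> (nat \<Rightarrow> nat) \<Rightarrow> (nat \<Rightarrow> nat) set" where
  "box k n d z0 = {z. config k n z \<and>
     (\<forall>i\<in>{1..k}. real (z0 i) / d \<le> real (z i) \<and> real (z i) \<le> d * max 1 (real (z0 i)))}"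

end

theory Submission
  imports Defs
begin

lemma box_D:
  assumes "z \<in> box k n d z0" "i \<in> {1..k}"
  shows "real (z0 i) / d \<le> real (z i)" "real (z i) \<le> d * max 1 (real (z0 i))"
  using assms unfolding box_def by auto

lemma box_config: "z \<in> box k n d z0 \<Longrightarrow> config k n z"
  unfolding box_def by auto

lemma config_le: "config k n z \<Longrightarrow> i \<in> {1..k} \<Longrightarrow> z i \<le> n"
  unfolding config_def by (metis finite_atLeastAtMost member_le_sum zero_le)

lemma z0_in_box: "config k n z0 \<Longrightarrow> 1 \<le> d \<Longrightarrow> z0 \<in> box k n d z0"
proof -
  assume c: "config k n z0" and d: "1 \<le> d"
  have "real (z0 i) / d \<le> real (z0 i) \<and> real (z0 i) \<le> d * max 1 (real (z0 i))" for i
  proof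
    show "real (z0 i) / d \<le> real (z0 i)" using d by (simp add: divide_le_eq mult_le_cancel_left1)
    have "real (z0 i) \<le> 1 * max 1 (real (z0 i))" by simp
    also have "\<dots> \<le> d * max 1 (real (z0 i))" using d by (intro mult_right_mono) auto
    finally show "real (z0 i) \<le> d * max 1 (real (z0 i))" .
  qed
  thus ?thesis using c unfolding box_def by auto
qed

lemma box_small:
  assumes c0: "config k n z0" and n: "n \<ge> 1" and d1: "1 \<le> d" and d2: "d < 1 + 1 / real n"
    and z: "z \<in> box k n d z0" and i: "i \<in> {1..k}"
  shows "z i = z0 i"
proof -
  have ge: "z0 l \<le> z l" if l: "l \<in> {1..k}" for l
  proof (cases "z0 l = 0")
    case False
    have le: "z0 l \<le> n" using config_le[OF c0 l] .
    have "d * (real (z0 l) - 1) \<le> (1 + 1 / real n) * (real (z0 l) - 1)"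
      using False d2 by (intro mult_right_mono) auto
    also have "\<dots> = real (z0 l) - 1 + (real (z0 l) - 1) / real n" by (simp add: algebra_simps add_divide_distrib[symmetric])
    also have "(real (z0 l) - 1) / real n < 1" using le n by (simp add: divide_less_eq)
    finally have "d * (real (z0 l) - 1) < real (z0 l)" by simp
    hence "real (z0 l) - 1 < real (z0 l) / d" using d1 by (simp add: field_simps)
    also have "\<dots> \<le> real (z l)" using box_D(1)[OF z l] .
    finally show ?thesis by simp
  qed simp
  have cz: "config k n z" using box_config[OF z] .
  have "sum z0 {1..k} = sum z {1..k}" using c0 cz unfolding config_def by simp
  from sum_mono_inv[OF this] ge i show ?thesis by auto
qed


lemma choose2_real: "2 * real (m choose 2) = real m * (real m - 1)"
proof (cases m)
  case (Suc l)
  have "m choose 2 = m * (m - 1) div 2" by (rule choose_two)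
  moreover have "even (m * (m - 1))" by (cases "even m") auto
  ultimately have "2 * (m choose 2) = m * (m - 1)" by simp
  hence "real (2 * (m choose 2)) = real (m * (m - 1))" by simp
  thus ?thesis using Suc by (simp add: of_nat_diff algebra_simps)
qed simp

lemma ratio_z:
  assumes z: "z \<in> box k n d z0" and z': "z' \<in> box k n d z0" and i: "i \<in> {1..k}"
    and d: "1 \<le> d" and z'1: "1 \<le> z' i"
  shows "real (z i) \<le> d * d * real (z' i)"
proof (cases "z0 i = 0")
  case True
  have "real (z i) \<le> d" using box_D(2)[OF z i] True by simp
  also have "\<dots> \<le> d * d * real (z' i)"
  proof -
    have "d \<le> d * d" using d by (simp add: mult_le_cancel_left1)
    also have "\<dots> \<le> d * d * real (z' i)" using z'1 d by (simp add: mult_le_cancel_left1)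
    finally show ?thesis .
  qed
  finally show ?thesis .
next
  case False
  have "real (z i) \<le> d * real (z0 i)" using box_D(2)[OF z i] False by simp
  also have "real (z0 i) \<le> d * real (z' i)" using box_D(1)[OF z' i] d by (simp add: divide_le_eq mult.commute)
  hence "d * real (z0 i) \<le> d * (d * real (z' i))" using d by simp
  finally show ?thesis by simp
qed

lemma state_AB:
  assumes d: "1 \<le> d" and P: "d * d \<le> P" and i: "i \<in> {1..k}"
  shows "(\<forall>z\<in>box k n d z0. real (z i) \<le> P) \<or>
         (\<forall>z\<in>box k n d z0. \<forall>z'\<in>box k n d z0. real (z i) \<le> P * real (z' i))"
proof (cases "z0 i = 0")
  case True
  have "\<forall>z\<in>box k n d z0. real (z i) \<le> P"
  proof
    fix z assume z: "z \<in> box k n d z0"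
    have "real (z i) \<le> d" using box_D(2)[OF z i] True by simp
    also have "d \<le> d * d" using d by (simp add: mult_le_cancel_left1)
    finally show "real (z i) \<le> P" using P by simp
  qed
  thus ?thesis ..
next
  case False
  have "\<forall>z\<in>box k n d z0. \<forall>z'\<in>box k n d z0. real (z i) \<le> P * real (z' i)"
  proof (intro ballI)
    fix z z' assume z: "z \<in> box k n d z0" and z': "z' \<in> box k n d z0"
    have "0 < real (z0 i) / d" using False d by simp
    hence "1 \<le> z' i" using box_D(1)[OF z' i] by simp
    hence "real (z i) \<le> d * d * real (z' i)" using ratio_z[OF z z' i d] by simp
    also have "\<dots> \<le> P * real (z' i)" using P by (simp add: mult_right_mono)
    finally show "real (z i) \<le> P * real (z' i)" .
  qed
  thus ?thesis ..
qed


lemma X_AB: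
  fixes E d :: real
  assumes n: "n \<ge> 2" and d: "1 \<le> d" and dE: "d \<le> E" and d4: "d^4 \<le> E" and E: "16 \<le> E"
    and a: "a \<in> {1..k}" and b: "b \<in> {1..k}"
  defines "X \<equiv> (\<lambda>z. if a = b then real (z a choose 2) else real (z a) * real (z b))"
  shows "(\<forall>z\<in>box k n d z0. 2 * X z \<le> E * E * (real n - 1)) \<or>
         (\<forall>z\<in>box k n d z0. \<forall>z'\<in>box k n d z0. X z \<le> E * E * X z')"
proof -
  let ?S = "box k n d z0"
  have n1: "1 \<le> real n - 1" using n by simp
  have EE: "E \<le> E * E" using E by (simp add: mult_le_cancel_left1)
  have d4EE: "d^4 \<le> E * E" using d4 EE by linarith
  have dd: "d * d \<le> d^4"
  proof -
    have "d * d * 1 \<le> d * d * (d * d)" using d by (intro mult_left_mono) (auto simp: mult_le_cancel_left1 intro: order_trans[OF _ mult_mono[of 1 d 1 d]])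
    thus ?thesis by (simp add: power4_eq_xxxx mult.assoc)
  qed
  show ?thesis
  proof (cases "a = b")
    case False
    show ?thesis
    proof (cases "z0 a = 0 \<or> z0 b = 0")
      case True
      have "\<forall>z\<in>?S. 2 * X z \<le> E * E * (real n - 1)"
      proof
        fix z assume z: "z \<in> ?S"
        have cz: "config k n z" using box_config[OF z] .
        have "real (z a) * real (z b) \<le> d * real n"
        proof (cases "z0 a = 0")
          case True
          have "real (z a) \<le> d" using box_D(2)[OF z a] True by simp
          moreover have "real (z b) \<le> real n" using config_le[OF cz b] by simp
          ultimately show ?thesis by (intro mult_mono) auto
        next
          case f: False
          hence "z0 b = 0" using \<open>z0 a = 0 \<or> z0 b = 0\<close> by simp
          hence "real (z b) \<le> d" using box_D(2)[OF z b] by simp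
          moreover have "real (z a) \<le> real n" using config_le[OF cz a] by simp
          ultimately show ?thesis by (subst mult.commute) (intro mult_mono, auto)
        qed
        hence "2 * X z \<le> 2 * d * real n" unfolding X_def using False by simp
        also have "\<dots> \<le> 4 * d * (real n - 1)" using n d by (simp add: mult.assoc mult_left_mono)
        also have "\<dots> \<le> E * E * (real n - 1)"
        proof (intro mult_right_mono)
          show "4 * d \<le> E * E" using mult_mono[of 4 E d E] E dE d by simp
        qed (use n1 in simp)
        finally show "2 * X z \<le> E * E * (real n - 1)" .
      qed
      thus ?thesis ..
    next
      case nz: False
      have "\<forall>z\<in>?S. \<forall>z'\<in>?S. X z \<le> E * E * X z'"
      proof (intro ballI)
        fix z z' assume z: "z \<in> ?S" and z': "z' \<in> ?S"
        have "0 < real (z0 a) / d" "0 < real (z0 b) / d" using nz d by auto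
        hence "1 \<le> z' a" "1 \<le> z' b" using box_D(1)[OF z' a] box_D(1)[OF z' b] by auto
        hence ra: "real (z a) \<le> d * d * real (z' a)" and rb: "real (z b) \<le> d * d * real (z' b)"
          using ratio_z[OF z z' a d] ratio_z[OF z z' b d] by auto
        have "real (z a) * real (z b) \<le> (d * d * real (z' a)) * (d * d * real (z' b))"
          using ra rb by (intro mult_mono) auto
        also have "\<dots> = d^4 * (real (z' a) * real (z' b))" by (simp add: power4_eq_xxxx algebra_simps)
        also have "\<dots> \<le> E * E * (real (z' a) * real (z' b))" using d4EE by (intro mult_right_mono) auto
        finally show "X z \<le> E * E * X z'" unfolding X_def using False by simp
      qed
      thus ?thesis ..
    qed
  next
    case True
    show ?thesis
    proof (cases "\<forall>z\<in>?S. 2 \<le> z a")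
      case True2: True
      have "\<forall>z\<in>?S. \<forall>z'\<in>?S. X z \<le> E * E * X z'"
      proof (intro ballI)
        fix z z' assume z: "z \<in> ?S" and z': "z' \<in> ?S"
        have z'2: "2 \<le> z' a" using True2 z' by blast
        have r: "real (z a) \<le> d * d * real (z' a)" using ratio_z[OF z z' a d] z'2 by simp
        have "2 * real (z a choose 2) = real (z a) * (real (z a) - 1)" by (rule choose2_real)
        also have "\<dots> \<le> real (z a) * real (z a)" by (intro mult_left_mono) auto
        also have "\<dots> \<le> (d * d * real (z' a)) * (d * d * real (z' a))" using r by (intro mult_mono) auto
        also have "\<dots> = d^4 * (real (z' a) * real (z' a))" by (simp add: power4_eq_xxxx algebra_simps)
        also have "real (z' a) * real (z' a) \<le> 2 * (real (z' a) * (real (z' a) - 1))"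
          using z'2 by (simp add: algebra_simps)
        also have "\<dots> = 4 * real (z' a choose 2)" using choose2_real[of "z' a"] by simp
        finally have "2 * real (z a choose 2) \<le> d^4 * (4 * real (z' a choose 2))" by (simp add: mult_left_mono)
        hence "real (z a choose 2) \<le> (2 * d^4) * real (z' a choose 2)" by simp
        also have "\<dots> \<le> E * E * real (z' a choose 2)"
        proof (intro mult_right_mono)
          show "2 * d^4 \<le> E * E" using mult_mono[of 2 E "d^4" E] E d4 by simp
        qed simp
        finally show "X z \<le> E * E * X z'" unfolding X_def using True by simp
      qed
      thus ?thesis ..
    next
      case False
      then obtain z' where z': "z' \<in> ?S" and z'1: "z' a \<le> 1" by auto
      have m: "max 1 (real (z0 a)) \<le> d"
      proof -
        have "real (z0 a) / d \<le> 1" using box_D(1)[OF z' a] z'1 by simp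
        hence "real (z0 a) \<le> d" using d by (simp add: divide_le_eq)
        thus ?thesis using d by simp
      qed
      have "\<forall>z\<in>?S. 2 * X z \<le> E * E * (real n - 1)"
      proof
        fix z assume z: "z \<in> ?S"
        have zd: "real (z a) \<le> d * d" using box_D(2)[OF z a] m d by (smt (verit) mult_left_mono)
        have "2 * X z = real (z a) * (real (z a) - 1)" unfolding X_def using True choose2_real by simp
        also have "\<dots> \<le> real (z a) * real (z a)" by (intro mult_left_mono) auto
        also have "\<dots> \<le> (d * d) * (d * d)" using zd by (intro mult_mono) auto
        also have "\<dots> = d^4" by (simp add: power4_eq_xxxx)
        also have "\<dots> \<le> E * E * 1" using d4EE by simp
        also have "\<dots> \<le> E * E * (real n - 1)" using n1 by (intro mult_left_mono) auto
        finally show "2 * X z \<le> E * E * (real n - 1)" .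
      qed
      thus ?thesis ..
    qed
  qed
qed


definition bad :: "nat \<Rightarrow> (nat \<Rightarrow> nat) set \<Rightarrow> ((nat \<Rightarrow> nat) \<Rightarrow> real) \<Rightarrow> real \<Rightarrow> real \<Rightarrow> bool" where
  "bad n S f s e \<longleftrightarrow> (\<exists>z\<in>S. f z > real n powr (e - s)) \<and> (\<exists>z\<in>S. f z < real n powr (24 * e - s))"

definition AB :: "nat \<Rightarrow> (nat \<Rightarrow> nat) set \<Rightarrow> ((nat \<Rightarrow> nat) \<Rightarrow> real) \<Rightarrow> real \<Rightarrow> real \<Rightarrow> bool" where
  "AB n S f s \<eta> \<longleftrightarrow> (\<forall>z\<in>S. f z \<le> real n powr (\<eta> - s)) \<or> (\<forall>z\<in>S. \<forall>z'\<in>S. f z \<le> real n powr \<eta> * f z')"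

lemma bad_two:
  assumes n: "n \<ge> 2" and eta: "\<eta> > 0" and ab: "AB n S f s \<eta>" and tt: "t < t'"
    and b1: "bad n S f s (\<eta> * 25 ^ t)" and b2: "bad n S f s (\<eta> * 25 ^ t')"
  shows False
proof -
  define e where "e = \<eta> * 25 ^ t"
  define e' where "e' = \<eta> * 25 ^ t'"
  have n1: "real n > 1" using n by simp
  have "(25::real) ^ t * 25 \<le> 25 ^ t'"
    using tt by (metis power_Suc power_increasing Suc_leI mult.commute of_nat_numeral one_le_numeral)
  hence ee: "25 * e \<le> e'" unfolding e_def e'_def using eta by (simp add: mult.commute mult.left_commute)
  have ee0: "\<eta> \<le> e" unfolding e_def using eta by simp
  from ab show False unfolding AB_def
  proof
    assume A: "\<forall>z\<in>S. f z \<le> real n powr (\<eta> - s)"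
    from b1 obtain z where z: "z \<in> S" "f z > real n powr (e - s)" unfolding bad_def e_def by blast
    have "real n powr (\<eta> - s) \<le> real n powr (e - s)" using ee0 n1 by (intro powr_mono) auto
    thus False using A z by force
  next
    assume B: "\<forall>z\<in>S. \<forall>z'\<in>S. f z \<le> real n powr \<eta> * f z'"
    from b2 obtain z1 where z1: "z1 \<in> S" "f z1 > real n powr (e' - s)" unfolding bad_def e'_def by blast
    from b1 obtain z2 where z2: "z2 \<in> S" "f z2 < real n powr (24 * e - s)" unfolding bad_def e_def by blast
    have "f z1 \<le> real n powr \<eta> * f z2" using B z1 z2 by blast
    also have "\<dots> < real n powr \<eta> * real n powr (24 * e - s)" using z2 n1 by simp
    also have "\<dots> = real n powr (\<eta> + 24 * e - s)" by (simp add: powr_add[symmetric] algebra_simps)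
    also have "\<dots> \<le> real n powr (e' - s)" using ee ee0 n1 by (intro powr_mono) auto
    finally show False using z1 by simp
  qed
qed

lemma bad_card:
  assumes "n \<ge> 2" "\<eta> > 0" "AB n S f s \<eta>"
  shows "card {t\<in>{..N}. bad n S f s (\<eta> * 25 ^ t)} \<le> 1"
proof -
  have "\<forall>a\<in>{t\<in>{..N}. bad n S f s (\<eta> * 25 ^ t)}. \<forall>b\<in>{t\<in>{..N}. bad n S f s (\<eta> * 25 ^ t)}. a = b"
  proof (intro ballI)
    fix a b assume a: "a \<in> {t\<in>{..N}. bad n S f s (\<eta> * 25 ^ t)}" and b: "b \<in> {t\<in>{..N}. bad n S f s (\<eta> * 25 ^ t)}"
    show "a = b"
    proof (cases a b rule: linorder_cases)
      case less thus ?thesis using bad_two[OF assms less] a b by auto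
    next
      case greater thus ?thesis using bad_two[OF assms greater] a b by auto
    qed auto
  qed
  thus ?thesis using card_le_Suc0_iff_eq[of "{t\<in>{..N}. bad n S f s (\<eta> * 25 ^ t)}"] by simp
qed

lemma good:
  assumes n: "n \<ge> 2" and z0: "z0 \<in> S" and nb: "\<not> bad n S f s e" and e: "e > 0"
  shows "(\<forall>z\<in>S. f z \<le> real n powr (e - s)) \<noteq> (\<forall>z\<in>S. f z \<ge> real n powr (24 * e - s))"
proof -
  have lt: "real n powr (e - s) < real n powr (24 * e - s)" using n e by (intro powr_less_mono) auto
  have "\<not> ((\<forall>z\<in>S. f z \<le> real n powr (e - s)) \<and> (\<forall>z\<in>S. f z \<ge> real n powr (24 * e - s)))"
    using z0 lt by force
  moreover have "(\<forall>z\<in>S. f z \<le> real n powr (e - s)) \<or> (\<forall>z\<in>S. f z \<ge> real n powr (24 * e - s))"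
    using nb unfolding bad_def by force
  ultimately show ?thesis by blast
qed

lemma rule_AB:
  fixes E d :: real
  assumes n: "n \<ge> 2" and d: "1 \<le> d" and dE: "d \<le> E" and d4: "d^4 \<le> E" and E: "16 \<le> E"
    and a: "i1 j \<in> {1..k}" and b: "i2 j \<in> {1..k}" and q: "0 \<le> q j" "q j \<le> 1"
    and P: "E * E = real n powr \<eta>"
  shows "AB n (box k n d z0) (\<lambda>z. rule_prob n i1 i2 q j z) 1 \<eta>"
proof -
  define X where "X \<equiv> (\<lambda>z. if i1 j = i2 j then real (z (i1 j) choose 2) else real (z (i1 j)) * real (z (i2 j)))"
  define C where "C = real (n choose 2)"
  have C2: "2 * C = real n * (real n - 1)" unfolding C_def by (rule choose2_real)
  have "real n * (real n - 1) > 0" using n by (intro mult_pos_pos) auto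
  hence Cpos: "C > 0" using C2 by linarith
  have rp: "rule_prob n i1 i2 q j z = q j * (X z / C)" for z
    unfolding rule_prob_def pair_prob_def X_def C_def by simp
  have X0: "X z \<ge> 0" for z unfolding X_def by simp
  have pw: "real n powr (\<eta> - 1) = E * E / real n" using P n by (simp add: powr_diff)
  have XX: "(\<forall>z\<in>box k n d z0. 2 * X z \<le> E * E * (real n - 1)) \<or>
         (\<forall>z\<in>box k n d z0. \<forall>z'\<in>box k n d z0. X z \<le> E * E * X z')"
    using X_AB[OF n d dE d4 E a b, of z0] unfolding X_def by simp
  from XX show ?thesis
  proof
    assume A: "\<forall>z\<in>box k n d z0. 2 * X z \<le> E * E * (real n - 1)"
    have "\<forall>z\<in>box k n d z0. rule_prob n i1 i2 q j z \<le> real n powr (\<eta> - 1)"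
    proof
      fix z assume z: "z \<in> box k n d z0"
      have "rule_prob n i1 i2 q j z \<le> 1 * (X z / C)" unfolding rp using q X0 Cpos
        by (intro mult_right_mono) auto
      also have "\<dots> = 2 * X z / (real n * (real n - 1))" using C2 by (simp add: C2[symmetric])
      also have "\<dots> \<le> E * E * (real n - 1) / (real n * (real n - 1))"
        using A z n by (intro divide_right_mono) auto
      also have "\<dots> = E * E / real n" using n by simp
      finally show "rule_prob n i1 i2 q j z \<le> real n powr (\<eta> - 1)" using pw by simp
    qed
    thus ?thesis unfolding AB_def by blast
  next
    assume B: "\<forall>z\<in>box k n d z0. \<forall>z'\<in>box k n d z0. X z \<le> E * E * X z'"
    have "\<forall>z\<in>box k n d z0. \<forall>z'\<in>box k n d z0. rule_prob n i1 i2 q j z \<le> real n powr \<eta> * rule_prob n i1 i2 q j z'"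
    proof (intro ballI)
      fix z z' assume z: "z \<in> box k n d z0" and z': "z' \<in> box k n d z0"
      have "q j * (X z / C) \<le> q j * (E * E * X z' / C)"
        using B z z' q Cpos by (intro mult_left_mono divide_right_mono) auto
      thus "rule_prob n i1 i2 q j z \<le> real n powr \<eta> * rule_prob n i1 i2 q j z'"
        unfolding rp P[symmetric] by (simp add: algebra_simps)
    qed
    thus ?thesis unfolding AB_def by blast
  qed
qed

lemma const_AB:
  assumes n: "n \<ge> 2" and eta: "\<eta> \<ge> 0" and f0: "\<And>z. f z \<ge> 0" and c: "\<And>z. z \<in> S \<Longrightarrow> f z = f w"
  shows "AB n S f s \<eta>"
proof -
  have "1 \<le> real n powr \<eta>" using n eta by (intro ge_one_powr_ge_zero) auto
  have "\<forall>z\<in>S. \<forall>z'\<in>S. f z \<le> real n powr \<eta> * f z'"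
  proof (intro ballI)
    fix z z' assume "z \<in> S" "z' \<in> S"
    hence "f z = f z'" using c by simp
    thus "f z \<le> real n powr \<eta> * f z'" using \<open>1 \<le> real n powr \<eta>\<close> f0[of z'] by (simp add: mult_le_cancel_right1)
  qed
  thus ?thesis unfolding AB_def ..
qed


theorem lemma26:
  fixes k :: nat and \<epsilon>\<^sub>1 :: real
  assumes "k \<ge> 1" and "0 < \<epsilon>\<^sub>1" and "\<epsilon>\<^sub>1 < 0.001"
  shows "\<exists>\<epsilon>\<^sub>0. 0 < \<epsilon>\<^sub>0 \<and> \<epsilon>\<^sub>0 < \<epsilon>\<^sub>1 \<and>
    (\<forall>n r i1 i2 o1 o2 q z0. n \<ge> 2 \<longrightarrow> protocol k r i1 i2 o1 o2 q \<longrightarrow> config k n z0 \<longrightarrow>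
      (\<exists>\<epsilon>. \<epsilon>\<^sub>0 \<le> \<epsilon> \<and> \<epsilon> \<le> \<epsilon>\<^sub>1 \<and>
        (\<forall>j\<in>{1..r}.
           (\<forall>z\<in>box k n (real n powr \<epsilon>\<^sub>0) z0. rule_prob n i1 i2 q j z \<le> real n powr (\<epsilon> - 1)) \<noteq>
           (\<forall>z\<in>box k n (real n powr \<epsilon>\<^sub>0) z0. rule_prob n i1 i2 q j z \<ge> real n powr (24 * \<epsilon> - 1))) \<and>
        (\<forall>i\<in>{1..k}.
           (\<forall>z\<in>box k n (real n powr \<epsilon>\<^sub>0) z0. real (z i) \<le> real n powr \<epsilon>) \<noteq>
           (\<forall>z\<in>box k n (real n powr \<epsilon>\<^sub>0) z0. real (z i) \<ge> real n powr (24 * \<epsilon>)))))"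
proof -
  define N where "N = k + k^4"
  define \<eta> where "\<eta> = \<epsilon>\<^sub>1 / 25^N"
  define T where "T = (16::real) powr (2/\<eta>)"
  define e0 where "e0 = min (\<eta>/8) (ln (1 + 1/T) / (2 * ln T))"
  have eta: "\<eta> > 0" unfolding \<eta>_def using assms by simp
  have "(1::real) \<le> 25^N" by simp
  hence eta1: "\<eta> \<le> \<epsilon>\<^sub>1" unfolding \<eta>_def using assms by (simp add: divide_le_eq mult_le_cancel_left1)
  have "(16::real) powr 0 < 16 powr (2/\<eta>)" using eta by (intro powr_less_mono) auto
  hence T1: "T > 1" unfolding T_def by simp
  have lnT: "ln T > 0" using T1 by simp
  have ln1: "ln (1 + 1/T) > 0" using T1 by (intro ln_gt_zero) simp
  have e0pos: "e0 > 0" unfolding e0_def using eta lnT ln1 by simp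
  have e0eta: "e0 \<le> \<eta>/8" unfolding e0_def by simp
  have Te0: "T powr e0 \<le> 1 + 1/T"
  proof -
    have "e0 * ln T \<le> (ln (1 + 1/T) / (2 * ln T)) * ln T" unfolding e0_def using lnT
      by (intro mult_right_mono) auto
    also have "\<dots> = ln (1 + 1/T) / 2" using lnT by simp
    also have "\<dots> \<le> ln (1 + 1/T)" using ln1 by simp
    finally have "exp (e0 * ln T) \<le> exp (ln (1 + 1/T))" by simp
    also have "\<dots> = 1 + 1/T" using T1 by (simp add: add_pos_pos)
    finally show ?thesis using T1 by (simp add: powr_def mult.commute)
  qed
  show ?thesis
  proof (rule exI[of _ e0], intro conjI allI impI)
    show "0 < e0" by (rule e0pos)
    show "e0 < \<epsilon>\<^sub>1" using e0eta eta eta1 by simp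
    fix n r i1 i2 o1 o2 q z0
    assume n: "2 \<le> n" and prot: "protocol k r i1 i2 o1 o2 q" and c0: "config k n z0"
    define d where "d = real n powr e0"
    define S where "S = box k n d z0"
    have n1: "real n \<ge> 1" using n by simp
    have d1: "1 \<le> d" unfolding d_def using n1 e0pos by (intro ge_one_powr_ge_zero) auto
    have z0S: "z0 \<in> S" unfolding S_def using z0_in_box[OF c0 d1] .
    have rk: "r \<le> k^4" and rules: "\<forall>j\<in>{1..r}. i1 j \<in> {1..k} \<and> i2 j \<in> {1..k} \<and> 0 \<le> q j \<and> q j \<le> 1"
      using prot unfolding protocol_def by auto
    have ABall: "(\<forall>i\<in>{1..k}. AB n S (\<lambda>z. real (z i)) 0 \<eta>) \<and>
                 (\<forall>j\<in>{1..r}. AB n S (\<lambda>z. rule_prob n i1 i2 q j z) 1 \<eta>)"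
    proof (cases "real n < T")
      case True
      have "d \<le> T powr e0" unfolding d_def using True e0pos by (intro powr_mono2) auto
      also have "\<dots> \<le> 1 + 1/T" by (rule Te0)
      also have "\<dots> < 1 + 1 / real n" using True n by (simp add: frac_less2)
      finally have dsm: "d < 1 + 1 / real n" .
      have eq: "z i = z0 i" if "z \<in> S" "i \<in> {1..k}" for z i
        using box_small[OF c0 _ d1 dsm] that n unfolding S_def by auto
      show ?thesis
      proof (intro conjI ballI)
        fix i assume i: "i \<in> {1..k}"
        show "AB n S (\<lambda>z. real (z i)) 0 \<eta>" using eq i eta n by (intro const_AB[where w = z0]) auto
      next
        fix j assume j: "j \<in> {1..r}"
        have "0 \<le> rule_prob n i1 i2 q j z" for z
          using rules j unfolding rule_prob_def pair_prob_def by simp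
        moreover have "rule_prob n i1 i2 q j z = rule_prob n i1 i2 q j z0" if "z \<in> S" for z
          using eq[OF that] rules j unfolding rule_prob_def pair_prob_def by simp
        ultimately show "AB n S (\<lambda>z. rule_prob n i1 i2 q j z) 1 \<eta>" using eta n
          by (intro const_AB[where w = z0]) auto
      qed
    next
      case False
      define E where "E = real n powr (\<eta>/2)"
      have "T powr (\<eta>/2) \<le> E" unfolding E_def using False eta T1 by (intro powr_mono2) auto
      moreover have "T powr (\<eta>/2) = 16" unfolding T_def using eta by (simp add: powr_powr)
      ultimately have E16: "16 \<le> E" by simp
      have dE: "d \<le> E" unfolding d_def E_def using e0eta eta n1 by (intro powr_mono) auto
      have "d^4 = real n powr (4 * e0)" unfolding d_def using n by (simp add: powr_power)
      also have "\<dots> \<le> E" unfolding E_def using e0eta eta n1 by (intro powr_mono) auto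
      finally have d4: "d^4 \<le> E" .
      have EE: "E * E = real n powr \<eta>" unfolding E_def by (simp add: powr_add[symmetric])
      have "d * d = real n powr (2 * e0)" unfolding d_def by (simp add: powr_add[symmetric])
      also have "\<dots> \<le> real n powr \<eta>" using e0eta eta n1 by (intro powr_mono) auto
      finally have dd: "d * d \<le> real n powr \<eta>" .
      show ?thesis
      proof (intro conjI ballI)
        fix i assume i: "i \<in> {1..k}"
        show "AB n S (\<lambda>z. real (z i)) 0 \<eta>"
          using state_AB[OF d1 dd i, of n z0] unfolding AB_def S_def by simp
      next
        fix j assume j: "j \<in> {1..r}"
        show "AB n S (\<lambda>z. rule_prob n i1 i2 q j z) 1 \<eta>"
          unfolding S_def using rules j by (intro rule_AB[OF n d1 dE d4 E16 _ _ _ _ EE]) auto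
      qed
    qed
    define Bs where "Bs i = {t\<in>{..N}. bad n S (\<lambda>z. real (z i)) 0 (\<eta> * 25 ^ t)}" for i
    define Br where "Br j = {t\<in>{..N}. bad n S (\<lambda>z. rule_prob n i1 i2 q j z) 1 (\<eta> * 25 ^ t)}" for j
    have cBs: "card (Bs i) \<le> 1" if "i \<in> {1..k}" for i
      unfolding Bs_def using bad_card[OF n eta] ABall that by blast
    have cBr: "card (Br j) \<le> 1" if "j \<in> {1..r}" for j
      unfolding Br_def using bad_card[OF n eta] ABall that by blast
    define U where "U = (\<Union>i\<in>{1..k}. Bs i) \<union> (\<Union>j\<in>{1..r}. Br j)"
    have "card (\<Union>i\<in>{1..k}. Bs i) \<le> (\<Sum>i\<in>{1..k}. card (Bs i))" by (rule card_UN_le) simp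
    also have "\<dots> \<le> card {1..k} * 1" using sum_bounded_above[of "{1..k}" "\<lambda>i. card (Bs i)" 1] cBs by simp
    finally have u1: "card (\<Union>i\<in>{1..k}. Bs i) \<le> k" by simp
    have "card (\<Union>j\<in>{1..r}. Br j) \<le> (\<Sum>j\<in>{1..r}. card (Br j))" by (rule card_UN_le) simp
    also have "\<dots> \<le> card {1..r} * 1" using sum_bounded_above[of "{1..r}" "\<lambda>i. card (Br i)" 1] cBr by simp
    finally have u2: "card (\<Union>j\<in>{1..r}. Br j) \<le> r" by simp
    have "card U \<le> k + r" unfolding U_def using card_Un_le u1 u2 by (meson add_mono order_trans)
    also have "\<dots> < card {..N}" unfolding N_def using rk by simp
    finally have cU: "card U < card {..N}" .
    have "U \<subseteq> {..N}" unfolding U_def Bs_def Br_def by auto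
    hence "finite U" by (rule finite_subset) simp
    hence "\<not> {..N} \<subseteq> U" using cU card_mono[of U "{..N}"] by linarith
    then obtain t where t: "t \<le> N" "t \<notin> U" by auto
    define \<epsilon> where "\<epsilon> = \<eta> * 25 ^ t"
    have epos: "\<epsilon> > 0" unfolding \<epsilon>_def using eta by simp
    show "\<exists>\<epsilon>. e0 \<le> \<epsilon> \<and> \<epsilon> \<le> \<epsilon>\<^sub>1 \<and>
        (\<forall>j\<in>{1..r}.
           (\<forall>z\<in>box k n (real n powr e0) z0. rule_prob n i1 i2 q j z \<le> real n powr (\<epsilon> - 1)) \<noteq>
           (\<forall>z\<in>box k n (real n powr e0) z0. rule_prob n i1 i2 q j z \<ge> real n powr (24 * \<epsilon> - 1))) \<and>
        (\<forall>i\<in>{1..k}.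
           (\<forall>z\<in>box k n (real n powr e0) z0. real (z i) \<le> real n powr \<epsilon>) \<noteq>
           (\<forall>z\<in>box k n (real n powr e0) z0. real (z i) \<ge> real n powr (24 * \<epsilon>)))"
    proof (intro exI[of _ \<epsilon>] conjI ballI)
      have "\<eta> * 1 \<le> \<eta> * 25 ^ t" using eta by (intro mult_left_mono) auto
      thus "e0 \<le> \<epsilon>" unfolding \<epsilon>_def using e0eta eta by linarith
      have "\<eta> * 25 ^ t \<le> \<eta> * 25 ^ N" using eta t by (intro mult_left_mono power_increasing) auto
      thus "\<epsilon> \<le> \<epsilon>\<^sub>1" unfolding \<epsilon>_def \<eta>_def by simp
    next
      fix j assume j: "j \<in> {1..r}"
      have "\<not> bad n S (\<lambda>z. rule_prob n i1 i2 q j z) 1 \<epsilon>" using t j unfolding U_def Br_def \<epsilon>_def by auto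
      from good[OF n z0S this epos] show
        "(\<forall>z\<in>box k n (real n powr e0) z0. rule_prob n i1 i2 q j z \<le> real n powr (\<epsilon> - 1)) \<noteq>
         (\<forall>z\<in>box k n (real n powr e0) z0. rule_prob n i1 i2 q j z \<ge> real n powr (24 * \<epsilon> - 1))"
        unfolding S_def d_def .
    next
      fix i assume i: "i \<in> {1..k}"
      have "\<not> bad n S (\<lambda>z. real (z i)) 0 \<epsilon>" using t i unfolding U_def Bs_def \<epsilon>_def by auto
      from good[OF n z0S this epos] show
        "(\<forall>z\<in>box k n (real n powr e0) z0. real (z i) \<le> real n powr \<epsilon>) \<noteq>
         (\<forall>z\<in>box k n (real n powr e0) z0. real (z i) \<ge> real n powr (24 * \<epsilon>))"
        unfolding S_def d_def by simp
    qed
  qed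
qed

end
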